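(* For any $\bm f\in\mathscr{F}$, the function $x_{\bm f}$ is not differentiable at any point $t\in[0,1]$ at which $f_\infty$ is continuous and $f_\infty(t)\neq0$. In particular, $x_{\bm f}$ is not differentiable at almost every point of $\{f_\infty\neq0\}$.
   Context: Faber--Schauder functions: $e_{0,0}(t)=\max\{0,\min\{t,1-t\}\}$, $e_{n,k}(t)=2^{-n/2}e_{0,0}(2^nt-k)$ for $n\ge1$, $k=0,\dots,2^n-1$. $\mathscr{F}$ is the class of sequences $\bm f=(f_n)_{n\ge0}$ of bounded functions $f_n:[0,1]\to\mathbb{R}$ converging uniformly to a Riemann integrable function $f_\infty$. For $\bm f\in\mathscr{F}$, $x_{\bm f}:=\sum_{n=0}^\infty\sum_{k=0}^{2^n-1}f_n(k2^{-n})e_{n,k}$. *)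

theory Defs
  imports "HOL-Analysis.Analysis"
begin

definition e00 :: "real \<Rightarrow> real" where
  "e00 t = max 0 (min t (1 - t))"

definition schauder :: "nat \<Rightarrow> nat \<Rightarrow> real \<Rightarrow> real" where
  "schauder n k t = (if n = 0 then e00 t
                     else 2 powr (- real n / 2) * e00 (2 ^ n * t - real k))"

definition riemann_integrable :: "(real \<Rightarrow> real) \<Rightarrow> real \<Rightarrow> real \<Rightarrow> bool" where
  "riemann_integrable f a b \<longleftrightarrow>
     bounded (f ` {a..b}) \<and>
     (\<forall>\<epsilon>>0. \<exists>(m::nat) (x::nat \<Rightarrow> real).
        x 0 = a \<and> x m = b \<and> (\<forall>i<m. x i < x (Suc i)) \<and>
        (\<Sum>i<m. ((SUP s\<in>{x i..x (Suc i)}. f s) - (INF s\<in>{x i..x (Suc i)}. f s))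
                   * (x (Suc i) - x i)) < \<epsilon>)"

definition in_class_F :: "(nat \<Rightarrow> real \<Rightarrow> real) \<Rightarrow> (real \<Rightarrow> real) \<Rightarrow> bool" where
  "in_class_F f finf \<longleftrightarrow>
     (\<forall>n. bounded (f n ` {0..1})) \<and>
     uniform_limit {0..1} f finf sequentially \<and>
     riemann_integrable finf 0 1"

definition x_f :: "(nat \<Rightarrow> real \<Rightarrow> real) \<Rightarrow> real \<Rightarrow> real" where
  "x_f f t = (\<Sum>n. \<Sum>k<2 ^ n. f n (real k / 2 ^ n) * schauder n k t)"

end

theory Submission
  imports Defs
begin

definition Sl :: "(nat \<Rightarrow> real \<Rightarrow> real) \<Rightarrow> nat \<Rightarrow> real \<Rightarrow> real" where
  "Sl f n t = (\<Sum>k<2 ^ n. f n (real k / 2 ^ n) * schauder n k t)"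

lemma x_f_Sl: "x_f f t = (\<Sum>n. Sl f n t)"
  by (simp add: x_f_def Sl_def)

lemma e00_int: "e00 (of_int z) = 0"
  by (cases "z \<le> 0") (auto simp: e00_def)

lemma schauder_eq: "k < 2 ^ n \<Longrightarrow> schauder n k t = 2 powr (- real n / 2) * e00 (2 ^ n * t - real k)"
  by (cases "n = 0") (auto simp: schauder_def)

lemma Sl_zero:
  assumes "2 ^ n * p = real_of_int z"
  shows "Sl f n p = 0"
  unfolding Sl_def
proof (rule sum.neutral, intro ballI)
  fix k assume "k \<in> {..<(2::nat) ^ n}"
  then have "k < 2 ^ n" by simp
  moreover have "2 ^ n * p - real k = of_int (z - int k)" using assms by simp
  then have "e00 (2 ^ n * p - real k) = 0" by (metis e00_int)
  with \<open>k < 2 ^ n\<close> show "f n (real k / 2 ^ n) * schauder n k p = 0"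
    by (simp add: schauder_eq)
qed

lemma e00_mid:
  assumes "\<alpha> \<le> \<beta>" "\<beta> \<le> 0 \<or> (0 \<le> \<alpha> \<and> \<beta> \<le> 1/2) \<or> (1/2 \<le> \<alpha> \<and> \<beta> \<le> 1) \<or> 1 \<le> \<alpha>"
  shows "e00 ((\<alpha> + \<beta>) / 2) = (e00 \<alpha> + e00 \<beta>) / 2"
proof -
  have alt: "\<And>x. e00 x = (if x \<le> 0 then 0 else if x \<le> 1/2 then x else if x \<le> 1 then 1 - x else 0)"
    unfolding e00_def by (auto simp: max_def min_def)
  from assms(2) consider "\<beta> \<le> 0" | "0 \<le> \<alpha> \<and> \<beta> \<le> 1/2" | "1/2 \<le> \<alpha> \<and> \<beta> \<le> 1" | "1 \<le> \<alpha>" by blast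
  then show ?thesis
  proof cases
    case 1 then show ?thesis using assms(1) by (simp add: alt)
  next
    case 2 then show ?thesis using assms(1) by (auto simp add: alt)
  next
    case 3
    have alt3: "\<And>x. 1/2 \<le> x \<Longrightarrow> x \<le> 1 \<Longrightarrow> e00 x = 1 - x"
      unfolding e00_def by (auto simp: max_def min_def)
    have "e00 ((\<alpha> + \<beta>) / 2) = 1 - (\<alpha> + \<beta>) / 2" using 3 assms(1) by (intro alt3) auto
    moreover have "e00 \<alpha> = 1 - \<alpha>" "e00 \<beta> = 1 - \<beta>" using 3 assms(1) by (auto intro: alt3)
    ultimately show ?thesis by (simp add: field_simps)
  next
    case 4 then show ?thesis using assms(1) by (auto simp add: alt)
  qed
qed

lemma schauder_mid:
  assumes "n < N" "k' < 2 ^ n"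
  shows "schauder n k' ((2 * real k + 1) / 2 ^ (Suc N)) =
     (schauder n k' (real k / 2 ^ N) + schauder n k' ((real k + 1) / 2 ^ N)) / 2"
proof -
  define h :: nat where "h = 2 ^ (N - n - 1)"
  have hpos: "h > 0" by (simp add: h_def)
  have pw: "(2::real) ^ N = 2 ^ n * (2 * real h)"
  proof -
    have "N = n + Suc (N - n - 1)" using assms by simp
    then have "(2::real) ^ N = 2 ^ n * 2 ^ Suc (N - n - 1)" by (metis power_add)
    then show ?thesis by (simp add: h_def)
  qed
  define i :: int where "i = int k - int k' * 2 * int h"
  define \<alpha> :: real where "\<alpha> = of_int i / (2 * real h)"
  define \<beta> :: real where "\<beta> = (of_int i + 1) / (2 * real h)"
  have ea: "2 ^ n * (real k / 2 ^ N) - real k' = \<alpha>"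
    using hpos by (simp add: pw \<alpha>_def i_def field_simps)
  have eb: "2 ^ n * ((real k + 1) / 2 ^ N) - real k' = \<beta>"
    using hpos by (simp add: pw \<beta>_def i_def field_simps)
  have em: "2 ^ n * ((2 * real k + 1) / 2 ^ Suc N) - real k' = (\<alpha> + \<beta>) / 2"
    using hpos by (simp add: pw \<alpha>_def \<beta>_def i_def field_simps)
  have le: "\<alpha> \<le> \<beta>" using hpos by (simp add: \<alpha>_def \<beta>_def divide_right_mono)
  have cases: "i \<le> -1 \<or> (0 \<le> i \<and> i \<le> int h - 1) \<or> (int h \<le> i \<and> i \<le> 2 * int h - 1) \<or> 2 * int h \<le> i"
    by linarith
  have hr: "real h > 0" using hpos by simp
  have cond: "\<beta> \<le> 0 \<or> (0 \<le> \<alpha> \<and> \<beta> \<le> 1/2) \<or> (1/2 \<le> \<alpha> \<and> \<beta> \<le> 1) \<or> 1 \<le> \<alpha>"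
  proof -
    consider "i \<le> -1" | "0 \<le> i \<and> i \<le> int h - 1" | "int h \<le> i \<and> i \<le> 2 * int h - 1" | "2 * int h \<le> i"
      using cases by blast
    then show ?thesis
    proof cases
      case 1
      then have "of_int i + 1 \<le> (0::real)" by linarith
      then show ?thesis using hr by (simp add: \<beta>_def divide_nonpos_pos)
    next
      case 2
      then have "0 \<le> (of_int i :: real)" "of_int i + 1 \<le> real h" by linarith+
      then show ?thesis using hr by (simp add: \<alpha>_def \<beta>_def field_simps)
    next
      case 3
      then have "real h \<le> (of_int i :: real)" "of_int i + 1 \<le> 2 * real h" by linarith+
      then show ?thesis using hr by (simp add: \<alpha>_def \<beta>_def field_simps)
    next
      case 4
      then have "2 * real h \<le> (of_int i :: real)" by linarith
      then show ?thesis using hr by (simp add: \<alpha>_def \<beta>_def field_simps)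
    qed
  qed
  show ?thesis
    unfolding schauder_eq[OF assms(2)] ea eb em e00_mid[OF le cond]
    by (simp add: algebra_simps)
qed

lemma x_f_dyadic:
  assumes "2 ^ M * p = real_of_int j"
  shows "x_f f p = (\<Sum>n<M. Sl f n p)"
  unfolding x_f_Sl
proof (rule suminf_finite)
  fix n assume "n \<notin> {..<M}"
  then have "M \<le> n" by simp
  then have "(2::real) ^ n = 2 ^ (n - M) * 2 ^ M" by (simp add: power_add[symmetric])
  then have "(2::real) ^ n * p = 2 ^ (n - M) * (2 ^ M * p)" by simp
  also have "\<dots> = real_of_int (2 ^ (n - M) * j)" using assms by simp
  finally show "Sl f n p = 0" by (rule Sl_zero)
qed simp

lemma Sl_mid:
  assumes "n < N"
  shows "Sl f n ((2 * real k + 1) / 2 ^ (Suc N)) =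
     (Sl f n (real k / 2 ^ N) + Sl f n ((real k + 1) / 2 ^ N)) / 2"
proof -
  have "Sl f n ((2 * real k + 1) / 2 ^ (Suc N)) = (\<Sum>k'<2^n. (f n (real k' / 2 ^ n) * schauder n k' (real k / 2 ^ N)
     + f n (real k' / 2 ^ n) * schauder n k' ((real k + 1) / 2 ^ N)) / 2)"
    unfolding Sl_def by (intro sum.cong refl, subst schauder_mid[OF assms]) (auto simp: algebra_simps)
  also have "\<dots> = (Sl f n (real k / 2 ^ N) + Sl f n ((real k + 1) / 2 ^ N)) / 2"
    unfolding Sl_def by (simp only: sum_divide_distrib[symmetric] sum.distrib)
  finally show ?thesis .
qed

lemma Sl_top:
  assumes "k < 2 ^ N"
  shows "Sl f N ((2 * real k + 1) / 2 ^ (Suc N)) = f N (real k / 2 ^ N) * 2 powr (- real N / 2) / 2"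
proof -
  have "\<And>k'. k' < 2 ^ N \<Longrightarrow> f N (real k' / 2 ^ N) * schauder N k' ((2 * real k + 1) / 2 ^ (Suc N))
     = (if k' = k then f N (real k / 2 ^ N) * 2 powr (- real N / 2) / 2 else 0)"
  proof -
    fix k' :: nat assume k': "k' < 2 ^ N"
    have e: "2 ^ N * ((2 * real k + 1) / 2 ^ (Suc N)) - real k' = of_int (int k - int k') + 1/2"
      by (simp add: field_simps)
    have z: "e00 (of_int z + 1/2) = (if z = 0 then 1/2 else 0)" for z :: int
    proof (cases "z = 0")
      case False
      show ?thesis
      proof (cases "z \<ge> 1")
        case True
        then have "(1::real) \<le> of_int z" by simp
        then show ?thesis using False unfolding e00_def by (auto simp: max_def min_def)
      next
        case f2: False
        then have "z \<le> -1" using False by linarith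
        then have "(of_int z::real) \<le> -1" by simp
        then show ?thesis using False unfolding e00_def by (auto simp: max_def min_def)
      qed
    qed (simp add: e00_def)
    show "?thesis k'" unfolding schauder_eq[OF k'] e z by simp
  qed
  then have "Sl f N ((2 * real k + 1) / 2 ^ (Suc N)) = (\<Sum>k'<2^N. if k' = k then f N (real k / 2 ^ N) * 2 powr (- real N / 2) / 2 else 0)"
    unfolding Sl_def by (intro sum.cong) auto
  also have "\<dots> = f N (real k / 2 ^ N) * 2 powr (- real N / 2) / 2" using assms by simp
  finally show ?thesis .
qed

lemma second_diff:
  assumes "k < 2 ^ N"
  shows "x_f f ((2 * real k + 1) / 2 ^ (Suc N)) - (x_f f (real k / 2 ^ N) + x_f f ((real k + 1) / 2 ^ N)) / 2
     = f N (real k / 2 ^ N) * 2 powr (- real N / 2) / 2"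
proof -
  have d1: "2 ^ Suc N * ((2 * real k + 1) / 2 ^ (Suc N)) = real_of_int (2 * int k + 1)" by simp
  have d2: "2 ^ Suc N * (real k / 2 ^ N) = real_of_int (2 * int k)" by simp
  have d3: "2 ^ Suc N * ((real k + 1) / 2 ^ N) = real_of_int (2 * int k + 2)" by (simp add: field_simps)
  have z2: "Sl f N (real k / 2 ^ N) = 0" by (rule Sl_zero[of _ _ "int k"]) simp
  have z3: "Sl f N ((real k + 1) / 2 ^ N) = 0" by (rule Sl_zero[of _ _ "int k + 1"]) simp
  have "x_f f ((2 * real k + 1) / 2 ^ (Suc N)) - (x_f f (real k / 2 ^ N) + x_f f ((real k + 1) / 2 ^ N)) / 2
     = (\<Sum>n<Suc N. Sl f n ((2 * real k + 1) / 2 ^ (Suc N)) - (Sl f n (real k / 2 ^ N) + Sl f n ((real k + 1) / 2 ^ N)) / 2)"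
    unfolding x_f_dyadic[OF d1] x_f_dyadic[OF d2] x_f_dyadic[OF d3] by (simp only: sum_subtractf sum.distrib sum_divide_distrib[symmetric])
  also have "\<dots> = (\<Sum>n<N. 0) + (Sl f N ((2 * real k + 1) / 2 ^ (Suc N)) - (Sl f N (real k / 2 ^ N) + Sl f N ((real k + 1) / 2 ^ N)) / 2)"
    unfolding sum.lessThan_Suc by (intro arg_cong2[where f="(+)"] sum.cong refl, subst Sl_mid) auto
  also have "\<dots> = f N (real k / 2 ^ N) * 2 powr (- real N / 2) / 2"
    by (simp only: Sl_top[OF assms] z2 z3) simp
  finally show ?thesis .
qed

lemma abs3: fixes x y z :: real shows "\<bar>x - (y + z) / 2\<bar> \<le> \<bar>x\<bar> + \<bar>y\<bar> / 2 + \<bar>z\<bar> / 2"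
proof -
  have "\<bar>x - (y + z) / 2\<bar> \<le> \<bar>x\<bar> + \<bar>(y + z) / 2\<bar>" by (rule abs_triangle_ineq4)
  moreover have "\<bar>(y + z) / 2\<bar> = \<bar>y + z\<bar> / 2" by simp
  moreover have "\<bar>y + z\<bar> \<le> \<bar>y\<bar> + \<bar>z\<bar>" by (rule abs_triangle_ineq)
  ultimately show ?thesis by linarith
qed

lemma dyadic_choice:
  assumes "t \<in> {0..1::real}"
  shows "\<exists>k<2^N. real k / 2^N \<le> t \<and> t \<le> (real k + 1) / 2^N"
proof (cases "t = 1")
  case True
  have "(1::nat) \<le> 2^N" by simp
  then have "real (2^N - 1) = 2^N - 1" by (simp add: of_nat_diff)
  then show ?thesis using True by (intro exI[of _ "2^N - 1"]) auto
next
  case False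
  then have t: "0 \<le> t" "t < 1" using assms by auto
  define z where "z = \<lfloor>2^N * t\<rfloor>"
  have z0: "0 \<le> z" using t unfolding z_def by simp
  have z1: "of_int z \<le> 2^N * t" "2^N * t < of_int z + 1" unfolding z_def by linarith+
  have "2^N * t < 2^N" using t by simp
  then have "of_int z < (2::real)^N" using z1 by linarith
  then have "of_int z < (of_int (2^N) :: real)" by simp
  then have "z < 2^N" by (simp only: of_int_less_iff)
  then have "nat z < 2^N" using z0 by (simp add: nat_less_iff)
  moreover have "real (nat z) = of_int z" using z0 by simp
  ultimately show ?thesis using z1 by (intro exI[of _ "nat z"]) (auto simp: field_simps)
qed

lemma part1:
  assumes F: "in_class_F f finf" and t: "t \<in> {0..1}"
    and cont: "continuous (at t within {0..1}) finf" and nz: "finf t \<noteq> 0"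
  shows "\<not> (x_f f) differentiable (at t within {0..1})"
proof
  assume "(x_f f) differentiable (at t within {0..1})"
  then obtain L where "(x_f f has_derivative L) (at t within {0..1})" unfolding differentiable_def by blast
  then have bl: "bounded_linear L" and der: "\<And>e. e > 0 \<Longrightarrow> \<exists>d>0. \<forall>y\<in>{0..1}. norm (y - t) < d \<longrightarrow>
       norm (x_f f y - x_f f t - L (y - t)) \<le> e * norm (y - t)"
    unfolding has_derivative_within_alt by auto
  from bl obtain c0 where L: "L = (\<lambda>x. x * c0)" using real_bounded_linear by blast
  have "\<forall>N. \<exists>k<2^N. real k / 2^N \<le> t \<and> t \<le> (real k + 1) / 2^N" using dyadic_choice[OF t] by blast
  then obtain kk where kk: "\<And>N. kk N < 2^N" "\<And>N. real (kk N) / 2^N \<le> t" "\<And>N. t \<le> (real (kk N) + 1) / 2^N"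
    by metis
  define c where "c = \<bar>finf t\<bar> / 8"
  have c: "c > 0" using nz by (simp add: c_def)
  have small: "\<forall>\<^sub>F N in sequentially. 1 / 2^N < d" if "d > 0" for d :: real
  proof -
    obtain N0 where "1 / d < 2 ^ N0" using real_arch_pow[of 2 "1/d"] by auto
    then have "1 / 2^N0 < d" using that by (simp add: field_simps)
    moreover have "1 / 2^N \<le> 1 / (2::real)^N0" if "N \<ge> N0" for N
      using that by (simp add: frac_le power_increasing)
    ultimately show ?thesis unfolding eventually_sequentially by (meson le_less_trans)
  qed
  obtain d where d: "d > 0" "\<forall>y\<in>{0..1}. norm (y - t) < d \<longrightarrow>
       norm (x_f f y - x_f f t - L (y - t)) \<le> c * norm (y - t)" using der[OF c] by blast
  have A: "\<forall>\<^sub>F N in sequentially. \<bar>f N (real (kk N) / 2^N)\<bar> \<le> 4 * c"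
    using small[OF d(1)]
  proof (rule eventually_mono)
    fix N :: nat assume N: "1 / 2^N < d"
    define a where "a = real (kk N) / 2^N"
    define b where "b = (real (kk N) + 1) / 2^N"
    define m where "m = (2 * real (kk N) + 1) / 2^(Suc N)"
    define E where "E y = x_f f y - x_f f t - (y - t) * c0" for y
    have "Suc (kk N) \<le> 2^N" using kk(1)[of N] by simp
    then have "real (Suc (kk N)) \<le> real (2^N)" by (simp only: of_nat_le_iff)
    then have kb: "real (kk N) + 1 \<le> 2^N" by simp
    have ab: "b - a = 1 / 2^N" unfolding a_def b_def by (simp add: field_simps)
    have mab: "m = (a + b) / 2" unfolding a_def b_def m_def by (simp add: field_simps)
    have at: "a \<le> t" "t \<le> b" using kk(2,3)[of N] by (auto simp: a_def b_def)
    have a0: "0 \<le> a" by (simp add: a_def)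
    have b1: "b \<le> 1" using kb by (simp add: b_def field_simps)
    have bnd: "\<bar>E y\<bar> \<le> c * (1 / 2^N)" if "a \<le> y" "y \<le> b" for y
    proof -
      have y01: "y \<in> {0..1}" using that a0 b1 by auto
      have dy: "\<bar>y - t\<bar> \<le> 1 / 2^N" using that at ab by linarith
      then have "norm (y - t) < d" using N by simp
      then have "\<bar>E y\<bar> \<le> c * \<bar>y - t\<bar>" using d(2) y01 by (simp add: E_def L)
      also have "\<dots> \<le> c * (1 / 2^N)" using dy c by (intro mult_left_mono) auto
      finally show ?thesis .
    qed
    have Ea: "\<bar>E a\<bar> \<le> c * (1 / 2^N)" using at by (intro bnd) auto
    have Eb: "\<bar>E b\<bar> \<le> c * (1 / 2^N)" using at by (intro bnd) auto
    have Em: "\<bar>E m\<bar> \<le> c * (1 / 2^N)" using at mab by (intro bnd) auto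
    have "E m - (E a + E b) / 2 = x_f f m - (x_f f a + x_f f b) / 2"
      unfolding E_def mab by (simp add: field_simps)
    also have "\<dots> = f N a * 2 powr (- real N / 2) / 2"
      unfolding a_def b_def m_def by (rule second_diff[OF kk(1)])
    finally have eq: "f N a * 2 powr (- real N / 2) / 2 = E m - (E a + E b) / 2" ..
    define p where "p = (2::real) powr (- real N / 2)"
    have p0: "p > 0" by (simp add: p_def)
    have "(2::real) powr (- real N / 2) \<le> 2 powr 0" by (intro powr_mono) auto
    then have p1: "p \<le> 1" unfolding p_def by simp
    have pp: "1 / 2^N = p * p"
    proof -
      have "p * p = 2 powr (- real N)" unfolding p_def by (simp flip: powr_add)
      also have "\<dots> = 1 / 2^N" by (simp add: powr_minus powr_realpow divide_inverse)
      finally show ?thesis ..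
    qed
    have eq': "f N a * p / 2 = E m - (E a + E b) / 2" using eq unfolding p_def .
    have "\<bar>f N a\<bar> * p / 2 = \<bar>E m - (E a + E b) / 2\<bar>" unfolding eq'[symmetric] using p0 by (simp add: abs_mult)
    also have "\<dots> \<le> \<bar>E m\<bar> + \<bar>E a\<bar> / 2 + \<bar>E b\<bar> / 2" by (rule abs3)
    also have "\<dots> \<le> 2 * c * (1 / 2^N)" using Ea Eb Em by linarith
    finally have "\<bar>f N a\<bar> * p / 2 \<le> 2 * c * (1 / 2^N)" .
    then have "\<bar>f N a\<bar> * p \<le> (4 * c * p) * p" unfolding pp by (simp add: algebra_simps)
    then have "\<bar>f N a\<bar> \<le> 4 * c * p" using p0 by simp
    also have "\<dots> \<le> 4 * c" using p1 c by simp
    finally show "\<bar>f N (real (kk N) / 2^N)\<bar> \<le> 4 * c" by (simp add: a_def)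
  qed
  from F have ul: "uniform_limit {0..1} f finf sequentially" by (simp add: in_class_F_def)
  then have U: "\<forall>\<^sub>F N in sequentially. \<forall>x\<in>{0..1}. dist (f N x) (finf x) < c"
    using c unfolding uniform_limit_iff by blast
  obtain \<delta> where \<delta>: "\<delta> > 0" "\<forall>x'\<in>{0..1}. dist x' t < \<delta> \<longrightarrow> dist (finf x') (finf t) < c"
    using cont c unfolding continuous_within_eps_delta by blast
  have B: "\<forall>\<^sub>F N in sequentially. \<bar>f N (real (kk N) / 2^N) - finf t\<bar> < 2 * c"
    using eventually_conj[OF U small[OF \<delta>(1)]]
  proof (rule eventually_mono)
    fix N :: nat assume N: "(\<forall>x\<in>{0..1}. dist (f N x) (finf x) < c) \<and> 1 / 2^N < \<delta>"
    define a where "a = real (kk N) / 2^N"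
    have "Suc (kk N) \<le> 2^N" using kk(1)[of N] by simp
    then have "real (Suc (kk N)) \<le> real (2^N)" by (simp only: of_nat_le_iff)
    then have kb: "real (kk N) + 1 \<le> 2^N" by simp
    have "a \<le> 1" using kb less_imp_le[OF kk(1)[of N]] by (simp add: a_def field_simps)
    then have a01: "a \<in> {0..1}" by (simp add: a_def)
    have "(real (kk N) + 1) / 2^N = a + 1 / 2^N" by (simp add: a_def add_divide_distrib)
    then have "t - a \<le> 1 / 2^N" using kk(3)[of N] by linarith
    then have "dist a t < \<delta>" using kk(2)[of N] N by (simp add: dist_real_def a_def)
    then have 1: "\<bar>finf a - finf t\<bar> < c" using \<delta>(2) a01 by (simp add: dist_real_def)
    have 2: "\<bar>f N a - finf a\<bar> < c" using N a01 by (simp add: dist_real_def)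
    from 1 2 show "\<bar>f N (real (kk N) / 2^N) - finf t\<bar> < 2 * c" unfolding a_def by linarith
  qed
  from eventually_conj[OF A B] obtain N where
    "\<bar>f N (real (kk N) / 2^N)\<bar> \<le> 4 * c" "\<bar>f N (real (kk N) / 2^N) - finf t\<bar> < 2 * c"
    unfolding eventually_sequentially by blast
  then have "\<bar>finf t\<bar> < 6 * c" by linarith
  then show False using c by (simp add: c_def)
qed

lemma mono_part:
  fixes x :: "nat \<Rightarrow> real"
  assumes "\<forall>i<m. x i < x (Suc i)" "i \<le> j" "j \<le> m"
  shows "x i \<le> x j"
  using assms(2,3)
proof (induction j)
  case 0 then show ?case by simp
next
  case (Suc j)
  show ?case
  proof (cases "i \<le> j")
    case True
    then have "x i \<le> x j" using Suc by simp
    also have "x j < x (Suc j)" using assms(1) Suc.prems by simp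
    finally show ?thesis by simp
  next
    case False
    then show ?thesis using Suc.prems by (simp add: le_Suc_eq)
  qed
qed

lemma find_cell:
  fixes x :: "nat \<Rightarrow> real"
  assumes inc: "\<forall>i<m. x i < x (Suc i)" and x0: "x 0 = 0" and xm: "x m = 1"
    and t: "t \<in> {0..1}" and nt: "t \<notin> x ` {..m}"
  shows "\<exists>i<m. x i < t \<and> t < x (Suc i)"
proof -
  define J where "J = {i. i \<le> m \<and> x i < t}"
  have fin: "finite J" unfolding J_def by simp
  have "t \<noteq> x 0" using nt by auto
  then have "0 \<in> J" using t x0 unfolding J_def by auto
  then have ne: "J \<noteq> {}" by auto
  define i where "i = Max J"
  have iJ: "i \<in> J" unfolding i_def using fin ne by simp
  have "t \<noteq> x m" using nt by auto
  then have "i \<noteq> m" using iJ t xm unfolding J_def by auto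
  then have im: "i < m" using iJ unfolding J_def by auto
  have "Suc i \<notin> J"
  proof
    assume "Suc i \<in> J"
    then have "Suc i \<le> i" using Max_ge[OF fin] i_def by blast
    then show False by simp
  qed
  then have "t \<le> x (Suc i)" using im unfolding J_def by auto
  moreover have "t \<noteq> x (Suc i)" using nt im by auto
  ultimately show ?thesis using im iJ unfolding J_def by (intro exI[of _ i]) auto
qed

lemma Dm_negligible:
  fixes g :: "real \<Rightarrow> real"
  assumes R: "riemann_integrable g 0 1" and ep: "\<epsilon> > 0"
  shows "negligible {t\<in>{0..1}. \<forall>\<delta>>0. \<exists>s\<in>{0..1}. \<bar>s - t\<bar> < \<delta> \<and> \<epsilon> \<le> \<bar>g s - g t\<bar>}"
    (is "negligible ?D")
  unfolding negligible_outer_le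
proof (intro allI impI)
  fix e :: real assume e: "e > 0"
  have bd: "bounded (g ` {0..1})" using R by (simp add: riemann_integrable_def)
  obtain m x where x0: "x 0 = 0" and xm: "x m = 1" and inc: "\<forall>i<m. x i < x (Suc i)"
    and sm: "(\<Sum>i<m. ((SUP s\<in>{x i..x (Suc i)}. g s) - (INF s\<in>{x i..x (Suc i)}. g s)) * (x (Suc i) - x i)) < \<epsilon> * e"
    using R ep e unfolding riemann_integrable_def by (meson mult_pos_pos)
  define osc where "osc i = (SUP s\<in>{x i..x (Suc i)}. g s) - (INF s\<in>{x i..x (Suc i)}. g s)" for i
  have sub: "{x i..x (Suc i)} \<subseteq> {0..1}" if "i < m" for i
  proof -
    have "x 0 \<le> x i" by (rule mono_part[OF inc]) (use that in auto)
    moreover have "x (Suc i) \<le> x m" by (rule mono_part[OF inc]) (use that in auto)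
    ultimately show ?thesis using x0 xm by auto
  qed
  have osc: "\<bar>g s - g s'\<bar> \<le> osc i" if "i < m" "s \<in> {x i..x (Suc i)}" "s' \<in> {x i..x (Suc i)}" for i s s'
  proof -
    have ba: "bdd_above (g ` {x i..x (Suc i)})"
      by (rule bdd_above_mono[OF bounded_imp_bdd_above[OF bd] image_mono[OF sub[OF that(1)]]])
    have bb: "bdd_below (g ` {x i..x (Suc i)})"
      by (rule bdd_below_mono[OF bounded_imp_bdd_below[OF bd] image_mono[OF sub[OF that(1)]]])
    have "g s \<le> (SUP s\<in>{x i..x (Suc i)}. g s)" "g s' \<le> (SUP s\<in>{x i..x (Suc i)}. g s)"
      using cSUP_upper[OF _ ba] that by auto
    moreover have "(INF s\<in>{x i..x (Suc i)}. g s) \<le> g s" "(INF s\<in>{x i..x (Suc i)}. g s) \<le> g s'"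
      using cINF_lower[OF bb] that by auto
    ultimately show ?thesis unfolding osc_def by linarith
  qed
  have osc0: "0 \<le> osc i" if "i < m" for i
    using osc[OF that, of "x i" "x i"] inc that by auto
  define I where "I = {i. i < m \<and> \<epsilon> \<le> osc i}"
  define T where "T = (\<Union>i\<in>I. {x i..x (Suc i)}) \<union> x ` {..m}"
  have finI: "finite I" unfolding I_def by simp
  have negF: "negligible (x ` {..m})" by (intro negligible_finite) simp
  have U: "(\<Union>i\<in>I. {x i..x (Suc i)}) \<in> lmeasurable"
    using finI by (intro fmeasurable.finite_UN) auto
  have Tm: "T \<in> lmeasurable" unfolding T_def
    by (intro fmeasurable.Un U negligible_imp_measurable negF)
  have "measure lebesgue T \<le> measure lebesgue (\<Union>i\<in>I. {x i..x (Suc i)}) + measure lebesgue (x ` {..m})"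
    unfolding T_def by (rule measure_Un_le[OF fmeasurableD[OF U] fmeasurableD[OF negligible_imp_measurable[OF negF]]])
  also have "measure lebesgue (x ` {..m}) = 0" using negF by (rule negligible_imp_measure0)
  also have "measure lebesgue (\<Union>i\<in>I. {x i..x (Suc i)}) \<le> (\<Sum>i\<in>I. measure lebesgue {x i..x (Suc i)})"
    using finI by (intro measure_UNION_le) auto
  also have "\<dots> = (\<Sum>i\<in>I. x (Suc i) - x i)"
    using inc by (intro sum.cong refl) (auto simp add: I_def less_imp_le)
  also have "\<dots> \<le> (\<Sum>i\<in>I. osc i * (x (Suc i) - x i) / \<epsilon>)"
  proof (intro sum_mono)
    fix i assume "i \<in> I"
    then have "\<epsilon> \<le> osc i" "x i < x (Suc i)" using inc by (auto simp: I_def)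
    then have "\<epsilon> * (x (Suc i) - x i) \<le> osc i * (x (Suc i) - x i)" by (intro mult_right_mono) auto
    then show "x (Suc i) - x i \<le> osc i * (x (Suc i) - x i) / \<epsilon>" using ep by (simp add: field_simps)
  qed
  also have "\<dots> \<le> (\<Sum>i<m. osc i * (x (Suc i) - x i) / \<epsilon>)"
    using osc0 inc ep by (intro sum_mono2) (auto simp: I_def less_imp_le intro!: divide_nonneg_pos mult_nonneg_nonneg)
  also have "\<dots> = (\<Sum>i<m. osc i * (x (Suc i) - x i)) / \<epsilon>" by (simp add: sum_divide_distrib)
  also have "\<dots> \<le> e" using sm ep unfolding osc_def by (simp add: field_simps)
  finally have mT: "measure lebesgue T \<le> e" by simp
  have DT: "?D \<subseteq> T"
  proof
    fix t assume tD: "t \<in> ?D"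
    show "t \<in> T"
    proof (cases "t \<in> x ` {..m}")
      case True then show ?thesis by (simp add: T_def)
    next
      case False
      then obtain i where i: "i < m" "x i < t" "t < x (Suc i)"
        using find_cell[OF inc x0 xm, of t] tD by auto
      define \<delta> where "\<delta> = min (t - x i) (x (Suc i) - t)"
      have "\<delta> > 0" using i by (simp add: \<delta>_def)
      then obtain s where s: "s \<in> {0..1}" "\<bar>s - t\<bar> < \<delta>" "\<epsilon> \<le> \<bar>g s - g t\<bar>" using tD by blast
      have "s \<in> {x i..x (Suc i)}" using s(2) by (auto simp: \<delta>_def abs_less_iff)
      moreover have "t \<in> {x i..x (Suc i)}" using i by auto
      ultimately have "\<epsilon> \<le> osc i" using osc[OF i(1)] s(3) by (meson order.trans)
      then have "i \<in> I" using i by (simp add: I_def)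
      then show ?thesis using \<open>t \<in> {x i..x (Suc i)}\<close> by (auto simp: T_def)
    qed
  qed
  show "\<exists>T. ?D \<subseteq> T \<and> T \<in> lmeasurable \<and> measure lebesgue T \<le> e"
    using DT Tm mT by blast
qed

lemma disc_negligible:
  fixes g :: "real \<Rightarrow> real"
  assumes R: "riemann_integrable g 0 1"
  shows "negligible {t\<in>{0..1}. \<not> continuous (at t within {0..1}) g}"
proof -
  define D where "D n = {t\<in>{0..1}. \<forall>\<delta>>0. \<exists>s\<in>{0..1}. \<bar>s - t\<bar> < \<delta> \<and> inverse (real (Suc n)) \<le> \<bar>g s - g t\<bar>}" for n
  have "negligible (\<Union>n. D n)"
    unfolding D_def by (intro negligible_Union_nat Dm_negligible[OF R]) simp
  moreover have "{t\<in>{0..1}. \<not> continuous (at t within {0..1}) g} \<subseteq> (\<Union>n. D n)"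
  proof
    fix t assume t: "t \<in> {t\<in>{0..1}. \<not> continuous (at t within {0..1}) g}"
    then obtain \<epsilon> where ep: "\<epsilon> > 0" and h: "\<forall>\<delta>>0. \<exists>x'\<in>{0..1}. dist x' t < \<delta> \<and> \<not> dist (g x') (g t) < \<epsilon>"
      unfolding continuous_within_eps_delta by auto
    obtain n where n: "n > 0" "inverse (real n) < \<epsilon>" using ex_inverse_of_nat_less[OF ep] by auto
    have "Suc (n - 1) = n" using n by simp
    then have "inverse (real (Suc (n - 1))) < \<epsilon>" using n by simp
    have "t \<in> D (n - 1)" unfolding D_def
    proof (intro CollectI conjI allI impI)
      show "t \<in> {0..1}" using t by simp
      fix \<delta> :: real assume "\<delta> > 0"
      then obtain s where "s \<in> {0..1}" "dist s t < \<delta>" "\<not> dist (g s) (g t) < \<epsilon>" using h by blast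
      then show "\<exists>s\<in>{0..1}. \<bar>s - t\<bar> < \<delta> \<and> inverse (real (Suc (n - 1))) \<le> \<bar>g s - g t\<bar>"
        using \<open>inverse (real (Suc (n - 1))) < \<epsilon>\<close> unfolding dist_real_def by (intro bexI[of _ s]) auto
    qed
    then show "t \<in> (\<Union>n. D n)" by blast
  qed
  ultimately show ?thesis by (rule negligible_subset)
qed


theorem proposition2p5:
  fixes f :: "nat \<Rightarrow> real \<Rightarrow> real" and finf :: "real \<Rightarrow> real"
  assumes "in_class_F f finf"
  shows "(\<forall>t\<in>{0..1}. continuous (at t within {0..1}) finf \<and> finf t \<noteq> 0 \<longrightarrow>
            \<not> (x_f f) differentiable (at t within {0..1}))
       \<and> (AE t in lebesgue. t \<in> {0..1} \<and> finf t \<noteq> 0 \<longrightarrow>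
            \<not> (x_f f) differentiable (at t within {0..1}))"
proof
  show P1: "\<forall>t\<in>{0..1}. continuous (at t within {0..1}) finf \<and> finf t \<noteq> 0 \<longrightarrow>
            \<not> (x_f f) differentiable (at t within {0..1})"
    using part1[OF assms] by blast
  have R: "riemann_integrable finf 0 1" using assms by (simp add: in_class_F_def)
  have N: "{t\<in>{0..1}. \<not> continuous (at t within {0..1}) finf} \<in> null_sets lebesgue"
    using disc_negligible[OF R] by (simp add: negligible_iff_null_sets)
  show "AE t in lebesgue. t \<in> {0..1} \<and> finf t \<noteq> 0 \<longrightarrow>
            \<not> (x_f f) differentiable (at t within {0..1})"
    by (rule AE_I'[OF N]) (use P1 in auto)
qed

end
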